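(* Let $p>5$ be a prime. There is no subgroup $H$ of $\mathbb{F}_p^\times$ and no element $g\in\mathbb{F}_p^\times$ such that the set $A:=gH\cup\{0\}$ (where $gH=\{gh\colon h\in H\}$) satisfies $A-A\doteq\mathcal{R}_p$.
   Context: $\mathcal{R}_p\subseteq\mathbb{F}_p$ denotes the set of nonzero quadratic residues modulo $p$. For subsets $A,S$ of an abelian group, $A-A\doteq S$ means: every element of $S$ has exactly one representation as $a'-a''$ with $a',a''\in A$, and every difference $a'-a''$ with $a',a''\in A$, $a'\ne a''$, belongs to $S$. *)

theory Defs
  imports "Berlekamp_Zassenhaus.Finite_Field"
begin

definition quad_res_set :: "'a::field set" where
  "quad_res_set = {x. x \<noteq> 0 \<and> (\<exists>y. y ^ 2 = x)}"

definition diff_exact :: "'a::ab_group_add set \<Rightarrow> 'a set \<Rightarrow> bool" where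
  "diff_exact A S \<longleftrightarrow>
     (\<forall>s\<in>S. \<exists>!(a1, a2). a1 \<in> A \<and> a2 \<in> A \<and> s = a1 - a2) \<and>
     (\<forall>a1\<in>A. \<forall>a2\<in>A. a1 \<noteq> a2 \<longrightarrow> a1 - a2 \<in> S)"

definition mult_subgroup :: "'a::field set \<Rightarrow> bool" where
  "mult_subgroup H \<longleftrightarrow> H \<subseteq> - {0} \<and> 1 \<in> H \<and>
     (\<forall>x\<in>H. \<forall>y\<in>H. x * y \<in> H) \<and> (\<forall>x\<in>H. inverse x \<in> H)"

end

theory Submission
  imports Defs
begin


lemma qr_mult: "x \<in> quad_res_set \<Longrightarrow> y \<in> quad_res_set \<Longrightarrow> x * y \<in> (quad_res_set::'a::field set)"
  unfolding quad_res_set_def by (auto simp: power_mult_distrib[symmetric] intro: exI[of _ "_ * _"])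

lemma qr_inv: "x \<in> quad_res_set \<Longrightarrow> inverse x \<in> (quad_res_set::'a::field set)"
  unfolding quad_res_set_def by (auto simp: power_inverse[symmetric])

lemma qr_nz: "x \<in> quad_res_set \<Longrightarrow> x \<noteq> 0" unfolding quad_res_set_def by auto

lemma qr_div: "x \<in> quad_res_set \<Longrightarrow> y \<in> quad_res_set \<Longrightarrow> x / y \<in> (quad_res_set::'a::field set)"
  by (simp add: divide_inverse qr_mult qr_inv)

lemma qr_card:
  assumes two: "(2::'a::{field,finite}) \<noteq> 0"
  shows "2 * card (quad_res_set::'a set) = CARD('a) - 1"
proof -
  let ?R = "quad_res_set::'a set"
  have fib: "card {x. x \<noteq> 0 \<and> x^2 = r} = 2" if "r \<in> ?R" for r
  proof -
    from that have "r \<noteq> 0 \<and> (\<exists>y. y^2 = r)" by (simp add: quad_res_set_def)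
    then obtain y where y: "y^2 = r" "r \<noteq> 0" by auto
    then have y0: "y \<noteq> 0" by auto
    have "x = y \<or> x = -y" if "x^2 = r" for x
    proof -
      have "(x - y) * (x + y) = 0" using y that by (simp add: algebra_simps power2_eq_square)
      then show ?thesis by (auto simp: eq_neg_iff_add_eq_0)
    qed
    then have "{x. x \<noteq> 0 \<and> x^2 = r} = {y, -y}" using y y0 by auto
    moreover have "y \<noteq> -y" using y0 two
      by (metis add.inverse_inverse add_eq_0_iff2 mult_2 no_zero_divisors)
    ultimately show ?thesis by simp
  qed
  have U: "UNIV - {0} = (\<Union>r\<in>?R. {x. x \<noteq> 0 \<and> x^2 = r})"
    unfolding quad_res_set_def by auto
  have "card (UNIV - {0::'a}) = (\<Sum>r\<in>?R. card {x. x \<noteq> 0 \<and> x^2 = r})"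
    unfolding U by (rule card_UN_disjoint) auto
  also have "\<dots> = (\<Sum>r\<in>?R. 2)" using fib by simp
  finally show ?thesis by (simp add: card_Diff_singleton)
qed

definition chi :: "'a::field \<Rightarrow> int" where
  "chi x = (if x = 0 then 0 else if x \<in> quad_res_set then 1 else -1)"

lemma sq_qr: "(x::'a::field) \<noteq> 0 \<Longrightarrow> x^2 \<in> quad_res_set"
  unfolding quad_res_set_def by auto

lemma nonres_mult:
  assumes two: "(2::'a::{field,finite}) \<noteq> 0"
    and x: "x \<noteq> 0" "x \<notin> quad_res_set" and y: "y \<noteq> 0" "y \<notin> quad_res_set"
  shows "x * y \<in> (quad_res_set::'a set)"
proof -
  let ?R = "quad_res_set::'a set"
  let ?N = "UNIV - {0} - ?R"
  have R0: "0 \<notin> ?R" by (auto simp: quad_res_set_def)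
  have cN: "card ?N = CARD('a) - 1 - card ?R"
  proof -
    have "card ?N = card (UNIV - insert 0 ?R)" by (rule arg_cong[where f=card]) auto
    moreover have "card (UNIV - insert 0 ?R) = CARD('a) - card (insert 0 ?R)"
      by (rule card_Diff_subset) auto
    moreover have "card (insert 0 ?R) = Suc (card ?R)"
      using R0 by (intro card_insert_disjoint) auto
    ultimately show ?thesis by linarith
  qed
  with qr_card[OF two] have cNR: "card ?N = card ?R" by simp
  have sub: "(\<lambda>r. x * r) ` ?R \<subseteq> ?N"
  proof
    fix z assume "z \<in> (\<lambda>r. x * r) ` ?R"
    then obtain r where r: "r \<in> ?R" "z = x * r" by auto
    have "z \<notin> ?R"
    proof
      assume "z \<in> ?R"
      then have "z / r \<in> ?R" using r qr_div by blast
      then show False using x r qr_nz[of r] by auto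
    qed
    then show "z \<in> ?N" using r x qr_nz[of r] by auto
  qed
  have "card ((\<lambda>r. x * r) ` ?R) = card ?R"
    by (rule card_image) (use x in \<open>auto simp: inj_on_def\<close>)
  then have img: "(\<lambda>r. x * r) ` ?R = ?N" using sub cNR by (intro card_subset_eq) simp_all
  have "y \<in> ?N" using y by blast
  then have "y \<in> (\<lambda>r. x * r) ` ?R" by (simp only: img)
  then obtain r where r: "r \<in> ?R" "y = x * r" by blast
  have "x * y = x^2 * r" using r by (simp add: power2_eq_square)
  then show ?thesis using qr_mult[OF sq_qr[OF x(1)] r(1)] by simp
qed

lemma chi_mult:
  assumes two: "(2::'a::{field,finite}) \<noteq> 0"
  shows "chi (x * y) = chi x * chi (y::'a)"
proof (cases "x = 0 \<or> y = 0")
  case True then show ?thesis by (auto simp: chi_def)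
next
  case False
  then have x: "x \<noteq> 0" and y: "y \<noteq> 0" by auto
  have a: "x * y \<notin> quad_res_set" if "x \<in> quad_res_set" "y \<notin> quad_res_set"
  proof
    assume "x * y \<in> quad_res_set"
    then have "x * y / x \<in> quad_res_set" using that qr_div by blast
    then show False using x that by simp
  qed
  have b: "x * y \<notin> quad_res_set" if "x \<notin> quad_res_set" "y \<in> quad_res_set"
  proof
    assume "x * y \<in> quad_res_set"
    then have "x * y / y \<in> quad_res_set" using that qr_div by blast
    then show False using y that by simp
  qed
  show ?thesis using x y a b qr_mult[of x y] nonres_mult[OF two x _ y]
    by (auto simp: chi_def)
qed

lemma nonres_card:
  assumes two: "(2::'a::{field,finite}) \<noteq> 0"
  shows "card {x::'a. x \<noteq> 0 \<and> x \<notin> quad_res_set} = card (quad_res_set::'a set)"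
proof -
  let ?R = "quad_res_set::'a set"
  have R0: "0 \<notin> ?R" by (auto simp: quad_res_set_def)
  have "card {x::'a. x \<noteq> 0 \<and> x \<notin> ?R} = card (UNIV - insert 0 ?R)" by (rule arg_cong[where f=card]) auto
  moreover have "card (UNIV - insert 0 ?R) = CARD('a) - card (insert 0 ?R)"
    by (rule card_Diff_subset) auto
  moreover have "card (insert 0 ?R) = Suc (card ?R)"
    using R0 by (intro card_insert_disjoint) auto
  ultimately show ?thesis using qr_card[OF two] by linarith
qed

lemma chi_sum:
  assumes two: "(2::'a::{field,finite}) \<noteq> 0"
  shows "(\<Sum>x::'a\<in>UNIV. chi x) = 0"
proof -
  let ?R = "quad_res_set::'a set"
  have R0: "0 \<notin> ?R" by (auto simp: quad_res_set_def)
  have e: "chi x = of_bool (x \<in> ?R) - of_bool (x \<noteq> 0 \<and> x \<notin> ?R)" for x :: 'a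
    using R0 by (auto simp: chi_def)
  have "(\<Sum>x::'a\<in>UNIV. chi x) = (\<Sum>x::'a\<in>UNIV. of_bool (x \<in> ?R)) - (\<Sum>x::'a\<in>UNIV. of_bool (x \<noteq> 0 \<and> x \<notin> ?R))"
    unfolding e by (simp add: sum_subtractf)
  also have "\<dots> = int (card ?R) - int (card {x::'a. x \<noteq> 0 \<and> x \<notin> ?R})"
    by simp
  finally show ?thesis using nonres_card[OF two] by simp
qed

lemma chi_sq: "(x::'a::field) \<noteq> 0 \<Longrightarrow> chi (x^2) = 1"
  using sq_qr by (auto simp: chi_def)

lemma reindex_aux:
  assumes d: "(d::'a::{field,finite}) \<noteq> 0"
  shows "(\<Sum>y\<in>UNIV - {0}. chi (1 + d / y)) = (\<Sum>z\<in>UNIV - {1::'a}. chi z)"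
  apply (rule sum.reindex_bij_witness[where i = "\<lambda>z. d / (z - 1)" and j = "\<lambda>y. 1 + d / y"])
  using d by auto

lemma jacobi0:
  assumes two: "(2::'a::{field,finite}) \<noteq> 0" and d: "d \<noteq> 0"
  shows "(\<Sum>y::'a\<in>UNIV. chi y * chi (y + d)) = -1"
proof -
  have "(\<Sum>y::'a\<in>UNIV. chi y * chi (y + d)) = (\<Sum>y\<in>UNIV - {0}. chi y * chi (y + d))"
    by (rule sum.mono_neutral_right) (auto simp: chi_def)
  also have "\<dots> = (\<Sum>y\<in>UNIV - {0}. chi (1 + d / y))"
  proof (rule sum.cong)
    fix y :: 'a assume "y \<in> UNIV - {0}"
    then have y: "y \<noteq> 0" by auto
    have e: "y * (y + d) = y^2 * (1 + d / y)" using y by (simp add: field_simps power2_eq_square)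
    have "chi y * chi (y + d) = chi (y * (y + d))" by (simp only: chi_mult[OF two])
    also have "\<dots> = chi (y^2) * chi (1 + d / y)" by (simp only: e chi_mult[OF two])
    finally show "chi y * chi (y + d) = chi (1 + d / y)" by (simp only: chi_sq[OF y] mult_1)
  qed simp
  also have "\<dots> = (\<Sum>z::'a\<in>UNIV - {1}. chi z)"
    using reindex_aux[OF d] .
  also have "\<dots> = (\<Sum>z::'a\<in>UNIV. chi z) - chi (1::'a)"
    by (simp add: sum_diff1)
  moreover have "chi (1::'a) = 1" using chi_sq[of "1::'a"] by simp
  ultimately show ?thesis using chi_sum[OF two] by simp
qed

lemma jacobi:
  assumes two: "(2::'a::{field,finite}) \<noteq> 0"
  shows "(\<Sum>y::'a\<in>UNIV. chi (y - b) * chi (y - c)) = (if b = c then int CARD('a) - 1 else -1)"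
proof -
  have "(\<Sum>y::'a\<in>UNIV. chi (y - b) * chi (y - c)) = (\<Sum>y::'a\<in>UNIV. chi y * chi (y + (b - c)))"
    by (rule sum.reindex_bij_witness[where i = "\<lambda>y. y + b" and j = "\<lambda>y. y - b"]) auto
  also have "\<dots> = (if b = c then int CARD('a) - 1 else -1)"
  proof (cases "b = c")
    case True
    have "(\<Sum>y::'a\<in>UNIV. chi y * chi y) = (\<Sum>y::'a\<in>UNIV - {0}. 1)"
      by (rule sum.mono_neutral_cong_right) (auto simp: chi_def)
    then show ?thesis using True by (simp add: card_Diff_singleton)
  next
    case False
    then show ?thesis using jacobi0[OF two, of "b - c"] by simp
  qed
  finally show ?thesis .
qed

lemma chi_R: "x \<in> quad_res_set \<Longrightarrow> chi x = 1"
  by (auto simp: chi_def quad_res_set_def)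

lemma chi_ge: "chi x \<ge> -1"
  by (auto simp: chi_def)

lemma diffE:
  assumes D: "diff_exact A (quad_res_set::'a::field set)"
  shows diff_in: "\<And>x y. x \<in> A \<Longrightarrow> y \<in> A \<Longrightarrow> x \<noteq> y \<Longrightarrow> x - y \<in> quad_res_set"
    and diff_uniq: "\<And>x y u v. x \<in> A \<Longrightarrow> y \<in> A \<Longrightarrow> u \<in> A \<Longrightarrow> v \<in> A \<Longrightarrow>
         x - y \<in> quad_res_set \<Longrightarrow> x - y = u - v \<Longrightarrow> x = u \<and> y = v"
    and diff_surj: "\<And>s. s \<in> quad_res_set \<Longrightarrow> \<exists>x\<in>A. \<exists>y\<in>A. s = x - y"
proof -
  show "\<And>x y. x \<in> A \<Longrightarrow> y \<in> A \<Longrightarrow> x \<noteq> y \<Longrightarrow> x - y \<in> quad_res_set"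
    using D unfolding diff_exact_def by blast
  show "\<And>s. s \<in> quad_res_set \<Longrightarrow> \<exists>x\<in>A. \<exists>y\<in>A. s = x - y"
    using D unfolding diff_exact_def by fast
  fix x y u v assume xy: "x \<in> A" "y \<in> A" "u \<in> A" "v \<in> A" "x - y \<in> quad_res_set" "x - y = u - v"
  from D xy(5) have "\<exists>!(a1, a2). a1 \<in> A \<and> a2 \<in> A \<and> x - y = a1 - a2"
    unfolding diff_exact_def by blast
  then obtain p where p: "\<And>q. (case q of (a1, a2) \<Rightarrow> a1 \<in> A \<and> a2 \<in> A \<and> x - y = a1 - a2) \<Longrightarrow> q = p"
    by (metis (no_types, lifting) ex1E)
  have "(x, y) = p" by (rule p) (use xy in auto)
  moreover have "(u, v) = p" by (rule p) (use xy in auto)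
  ultimately show "x = u \<and> y = v" by (metis prod.inject)
qed



lemma card_offdiag:
  assumes "finite A"
  shows "card {p \<in> A \<times> A. fst p \<noteq> snd p} = card A * card A - card A"
proof -
  have e: "{p \<in> A \<times> A. fst p \<noteq> snd p} = A \<times> A - (\<lambda>x. (x, x)) ` A" by auto
  have "card ((\<lambda>x. (x, x)) ` A) = card A" by (rule card_image) (auto simp: inj_on_def)
  moreover have "card (A \<times> A - (\<lambda>x. (x, x)) ` A) = card (A \<times> A) - card ((\<lambda>x. (x, x)) ` A)"
    by (rule card_Diff_subset) (use assms in auto)
  ultimately show ?thesis unfolding e by (simp add: card_cartesian_product)
qed

lemma gen_card:
  fixes A :: "'a::{field,finite} set"
  assumes two: "(2::'a) \<noteq> 0" and D: "diff_exact A quad_res_set"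
  shows "2 * (card A * card A - card A) = CARD('a) - 1"
proof -
  let ?P = "{p \<in> A \<times> A. fst p \<noteq> snd p}"
  have "bij_betw (\<lambda>p. fst p - snd p) ?P quad_res_set"
  proof (rule bij_betwI')
    fix p q assume "p \<in> ?P" "q \<in> ?P"
    then show "(fst p - snd p = fst q - snd q) = (p = q)"
      using diff_uniq[OF D, of "fst p" "snd p" "fst q" "snd q"] diff_in[OF D, of "fst p" "snd p"]
      by (auto simp: prod_eq_iff)
  next
    fix p assume "p \<in> ?P" then show "fst p - snd p \<in> quad_res_set"
      using diff_in[OF D] by auto
  next
    fix s assume s: "s \<in> (quad_res_set::'a set)"
    then obtain x y where xy: "x \<in> A" "y \<in> A" "s = x - y" using diff_surj[OF D] by blast
    then have "x \<noteq> y" using s qr_nz[of s] by auto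
    then show "\<exists>p\<in>?P. s = fst p - snd p" using xy by (intro bexI[of _ "(x, y)"]) auto
  qed
  then have "card ?P = card (quad_res_set::'a set)" by (rule bij_betw_same_card)
  then show ?thesis using card_offdiag[of A] qr_card[OF two] by simp
qed

definition fA :: "'a::field set \<Rightarrow> 'a \<Rightarrow> int" where
  "fA A y = (\<Sum>b\<in>A. chi (y - b))"

lemma delta_sum:
  assumes "finite A" "b \<in> A"
  shows "(\<Sum>c\<in>A. (if b = c then X else -1::int)) = X + 1 - int (card A)"
proof -
  have "(\<Sum>c\<in>A. (if b = c then X else -1::int)) = (\<Sum>c\<in>A. (if c = b then X + 1 else 0) - 1)"
    by (rule sum.cong) auto
  also have "\<dots> = (X + 1) - int (card A)"
    using assms by (simp add: sum_subtractf)
  finally show ?thesis by simp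
qed

lemma F3:
  fixes A :: "'a::{field,finite} set"
  assumes two: "(2::'a) \<noteq> 0"
  shows "(\<Sum>y\<in>UNIV. (fA A y)^2) = int (card A) * (int CARD('a) - int (card A))"
proof -
  have "(\<Sum>y\<in>UNIV. (fA A y)^2) = (\<Sum>y\<in>UNIV. \<Sum>b\<in>A. \<Sum>c\<in>A. chi (y - b) * chi (y - c))"
    unfolding fA_def power2_eq_square sum_product ..
  also have "\<dots> = (\<Sum>b\<in>A. \<Sum>y\<in>UNIV. \<Sum>c\<in>A. chi (y - b) * chi (y - c))"
    by (rule sum.swap)
  also have "\<dots> = (\<Sum>b\<in>A. \<Sum>c\<in>A. \<Sum>y\<in>UNIV. chi (y - b) * chi (y - c))"
    by (rule sum.cong[OF refl], rule sum.swap)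
  also have "\<dots> = (\<Sum>b\<in>A. \<Sum>c\<in>A. (if b = c then int CARD('a) - 1 else -1))"
    by (simp only: jacobi[OF two])
  also have "\<dots> = (\<Sum>b\<in>A. int CARD('a) - int (card A))"
    by (rule sum.cong[OF refl]) (simp add: delta_sum)
  finally show ?thesis by simp
qed

lemma chi_neg:
  assumes two: "(2::'a::{field,finite}) \<noteq> 0" and m1: "(-1::'a) \<in> quad_res_set"
  shows "chi (- x) = chi (x::'a)"
proof -
  have c: "chi (-1::'a) = 1" by (rule chi_R[OF m1])
  have "chi ((-1) * x) = chi (-1::'a) * chi x" by (rule chi_mult[OF two])
  then show ?thesis using c by simp
qed

lemma F4:
  fixes A :: "'a::{field,finite} set"
  assumes two: "(2::'a) \<noteq> 0" and m1: "(-1::'a) \<in> quad_res_set"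
    and A0: "0 \<in> A" and sym: "\<And>a. a \<in> A \<Longrightarrow> -a \<in> A \<Longrightarrow> a = 0"
  shows "(\<Sum>y\<in>UNIV. fA A y * fA A (-y)) = int CARD('a) - int (card A) * int (card A)"
proof -
  have neg: "fA A (-y) = (\<Sum>c\<in>A. chi (y - (-c)))" for y
    unfolding fA_def by (rule sum.cong[OF refl]) (subst chi_neg[OF two m1, symmetric], simp)
  have "(\<Sum>y\<in>UNIV. fA A y * fA A (-y)) = (\<Sum>y\<in>UNIV. \<Sum>b\<in>A. \<Sum>c\<in>A. chi (y - b) * chi (y - (-c)))"
    unfolding neg unfolding fA_def sum_product ..
  also have "\<dots> = (\<Sum>b\<in>A. \<Sum>y\<in>UNIV. \<Sum>c\<in>A. chi (y - b) * chi (y - (-c)))"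
    by (rule sum.swap)
  also have "\<dots> = (\<Sum>b\<in>A. \<Sum>c\<in>A. \<Sum>y\<in>UNIV. chi (y - b) * chi (y - (-c)))"
    by (rule sum.cong[OF refl], rule sum.swap)
  also have "\<dots> = (\<Sum>b\<in>A. \<Sum>c\<in>A. (if b = -c then int CARD('a) - 1 else -1))"
    by (simp only: jacobi[OF two])
  also have "\<dots> = (\<Sum>b\<in>A. (if b = 0 then int CARD('a) else 0) - int (card A))"
  proof (rule sum.cong[OF refl])
    fix b assume b: "b \<in> A"
    have "(\<Sum>c\<in>A. (if b = -c then int CARD('a) - 1 else -1)) = (\<Sum>c\<in>A. (if c = -b then int CARD('a) else 0) - 1)"
      by (rule sum.cong[OF refl]) auto
    also have "\<dots> = (if -b \<in> A then int CARD('a) else 0) - int (card A)"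
      by (simp add: sum_subtractf)
    also have "\<dots> = (if b = 0 then int CARD('a) else 0) - int (card A)"
      using sym[OF b] A0 by auto
    finally show "(\<Sum>c\<in>A. (if b = -c then int CARD('a) - 1 else -1)) = (if b = 0 then int CARD('a) else 0) - int (card A)" .
  qed
  also have "\<dots> = int CARD('a) - int (card A) * int (card A)"
    using A0 by (simp add: sum_subtractf)
  finally show ?thesis .
qed

lemma gen_bound:
  fixes A :: "'a::{field,finite} set"
  assumes two: "(2::'a) \<noteq> 0" and D: "diff_exact A quad_res_set"
    and A0: "0 \<in> A" and a0: "a0 \<in> A" "a0 \<noteq> 0"
    and pos: "\<And>a b. a \<in> A \<Longrightarrow> b \<in> A \<Longrightarrow> a \<noteq> 0 \<Longrightarrow> b \<noteq> 0 \<Longrightarrow> a \<noteq> b \<Longrightarrow> a + b \<in> quad_res_set"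
  shows "card A \<le> 4"
proof -
  let ?R = "quad_res_set :: 'a set"
  let ?n = "int (card A)"
  let ?q = "int CARD('a)"
  have a0R: "a0 - 0 \<in> ?R" by (rule diff_in[OF D a0(1) A0 a0(2)])
  have a0R': "0 - a0 \<in> ?R" using diff_in[OF D A0 a0(1)] a0(2) by auto
  have m1: "(-1::'a) \<in> ?R"
  proof -
    have "(0 - a0) / (a0 - 0) \<in> ?R" by (rule qr_div[OF a0R' a0R])
    then show ?thesis using a0(2) by simp
  qed
  have sym: "a = 0" if "a \<in> A" "-a \<in> A" for a
  proof (rule ccontr)
    assume "a \<noteq> 0"
    then have "a - 0 \<in> ?R" using diff_in[OF D that(1) A0] by auto
    moreover have "a - 0 = 0 - (-a)" by simp
    ultimately have "a = 0" using diff_uniq[OF D that(1) A0 A0 that(2)] by blast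
    with \<open>a \<noteq> 0\<close> show False ..
  qed
  have F1: "fA A a = ?n - 1" if a: "a \<in> A" for a
  proof -
    have "fA A a = (\<Sum>b\<in>A. 1 - (if b = a then 1 else 0))"
      unfolding fA_def
    proof (rule sum.cong[OF refl])
      fix b assume b: "b \<in> A"
      show "chi (a - b) = 1 - (if b = a then 1 else 0)"
      proof (cases "b = a")
        case True then show ?thesis by (simp add: chi_def)
      next
        case False then show ?thesis using chi_R[OF diff_in[OF D a b]] by auto
      qed
    qed
    also have "\<dots> = ?n - 1" using a by (simp add: sum_subtractf)
    finally show ?thesis .
  qed
  have F2: "fA A (-a) \<ge> ?n - 2" if a: "a \<in> A" "a \<noteq> 0" for a
  proof -
    have "(\<Sum>b\<in>A. 1 - (if b = a then 2 else 0)) \<le> fA A (-a)"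
      unfolding fA_def
    proof (rule sum_mono)
      fix b assume b: "b \<in> A"
      have e: "chi (- a - b) = chi (a + b)"
        using chi_neg[OF two m1, of "a + b"] by (simp add: algebra_simps)
      show "1 - (if b = a then 2 else 0) \<le> chi (- a - b)"
      proof (cases "b = a")
        case True then show ?thesis using chi_ge[of "-a-b"] by simp
      next
        case False
        show ?thesis
        proof (cases "b = 0")
          case True then show ?thesis using e chi_R[OF a0R[of]] chi_R[OF diff_in[OF D a(1) A0 a(2)]] by simp
        next
          case b0: False
          then show ?thesis using e chi_R[OF pos[OF a(1) b a(2) b0]] False by auto
        qed
      qed
    qed
    moreover have "(\<Sum>b\<in>A. 1 - (if b = a then 2 else 0)) = ?n - 2"
      using a by (simp add: sum_subtractf)
    ultimately show ?thesis by simp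
  qed
  have n2: "card A \<ge> 2"
  proof -
    have "card {0, a0} \<le> card A" by (rule card_mono) (use A0 a0 in auto)
    then show ?thesis using a0 by simp
  qed
  define G where "G y = (fA A y + fA A (-y))^2" for y
  have S1: "(\<Sum>y\<in>UNIV. G y) = 2 * (?n * (?q - ?n)) + 2 * (?q - ?n * ?n)"
  proof -
    have r: "(\<Sum>y\<in>UNIV. (fA A (-y))^2) = (\<Sum>y\<in>UNIV. (fA A y)^2)"
      by (rule sum.reindex_bij_witness[where i = uminus and j = uminus]) auto
    have "(\<Sum>y\<in>UNIV. G y) = (\<Sum>y\<in>UNIV. (fA A y)^2 + (fA A (-y))^2 + 2 * (fA A y * fA A (-y)))"
      unfolding G_def by (rule sum.cong[OF refl]) (simp add: power2_sum)
    also have "\<dots> = (\<Sum>y\<in>UNIV. (fA A y)^2) + (\<Sum>y\<in>UNIV. (fA A (-y))^2) + 2 * (\<Sum>y\<in>UNIV. fA A y * fA A (-y))"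
      by (simp add: sum.distrib sum_distrib_left)
    also have "\<dots> = 2 * (?n * (?q - ?n)) + 2 * (?q - ?n * ?n)"
      using r F3[OF two, of A] F4[OF two m1 A0 sym] by simp
    finally show ?thesis .
  qed
  have Gpos: "G y \<ge> 0" for y unfolding G_def by simp
  have Gbig: "G a \<ge> (2 * ?n - 3)^2" "G (-a) \<ge> (2 * ?n - 3)^2" if a: "a \<in> A" "a \<noteq> 0" for a
  proof -
    have "fA A a + fA A (-a) \<ge> 2 * ?n - 3" using F1[OF a(1)] F2[OF a] by simp
    moreover have "2 * ?n - 3 \<ge> 0" using n2 by simp
    ultimately have "(2 * ?n - 3)^2 \<le> (fA A a + fA A (-a))^2"
      by (intro power_mono) auto
    then show "G a \<ge> (2 * ?n - 3)^2" "G (-a) \<ge> (2 * ?n - 3)^2"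
      unfolding G_def by (simp_all add: add.commute)
  qed
  have G0: "G 0 = (2 * (?n - 1))^2" unfolding G_def using F1[OF A0] by simp
  have disj: "A \<inter> uminus ` (A - {0}) = {}" using sym by auto
  have "(\<Sum>y\<in>A \<union> uminus ` (A - {0}). G y) \<le> (\<Sum>y\<in>UNIV. G y)"
    by (rule sum_mono2) (auto intro: Gpos)
  moreover have "(\<Sum>y\<in>A \<union> uminus ` (A - {0}). G y) = (\<Sum>y\<in>A. G y) + (\<Sum>y\<in>uminus ` (A - {0}). G y)"
    by (rule sum.union_disjoint) (use disj in auto)
  moreover have "(\<Sum>y\<in>uminus ` (A - {0}). G y) = (\<Sum>y\<in>A - {0}. G (-y))"
    by (subst sum.reindex) (auto simp: inj_on_def)
  moreover have "(\<Sum>y\<in>A. G y) = G 0 + (\<Sum>y\<in>A - {0}. G y)"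
    using A0 by (simp add: sum.remove)
  moreover have "(\<Sum>y\<in>A - {0}. (2 * ?n - 3)^2) \<le> (\<Sum>y\<in>A - {0}. G y)"
    by (rule sum_mono) (use Gbig in auto)
  moreover have "(\<Sum>y\<in>A - {0}. (2 * ?n - 3)^2) \<le> (\<Sum>y\<in>A - {0}. G (-y))"
    by (rule sum_mono) (use Gbig in auto)
  moreover have "(\<Sum>y\<in>A - {0}. (2 * ?n - 3)^2) = (?n - 1) * (2 * ?n - 3)^2"
    using A0 n2 by (simp add: card_Diff_singleton of_nat_diff)
  ultimately have ineq: "(2 * (?n - 1))^2 + 2 * ((?n - 1) * (2 * ?n - 3)^2) \<le> 2 * (?n * (?q - ?n)) + 2 * (?q - ?n * ?n)"
    using S1 G0 by linarith
  have qn: "?q = 2 * ?n * ?n - 2 * ?n + 1"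
  proof -
    have "2 * (card A * card A - card A) = CARD('a) - 1" by (rule gen_card[OF two D])
    moreover have "card A * card A \<ge> card A" by simp
    moreover have "CARD('a) \<ge> 1" by (simp add: Suc_leI)
    ultimately have "int (2 * (card A * card A - card A)) = ?q - 1" by (simp add: of_nat_diff)
    then show ?thesis by (simp add: of_nat_diff algebra_simps)
  qed
  define m where "m = ?n - 1"
  have "4 * m^2 * (m - 3) \<le> 0"
    using ineq unfolding qn m_def by (simp add: algebra_simps power2_eq_square power3_eq_cube)
  moreover have "m \<ge> 1" using n2 unfolding m_def by simp
  ultimately have "m \<le> 3"
    by (smt (verit) mult_pos_pos power2_eq_square)
  then show ?thesis unfolding m_def by simp
qed



theorem theorem2:
  assumes "CARD('p::prime_card) > 5"
  shows "\<not> (\<exists>(H :: 'p mod_ring set) (g :: 'p mod_ring).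
            mult_subgroup H \<and> g \<noteq> 0 \<and>
            diff_exact ((\<lambda>h. g * h) ` H \<union> {0}) quad_res_set)"
proof
  assume "\<exists>(H :: 'p mod_ring set) (g :: 'p mod_ring).
            mult_subgroup H \<and> g \<noteq> 0 \<and>
            diff_exact ((\<lambda>h. g * h) ` H \<union> {0}) quad_res_set"
  then obtain H and g :: "'p mod_ring" where HG: "mult_subgroup H" "g \<noteq> 0"
    and D: "diff_exact ((\<lambda>h. g * h) ` H \<union> {0}) quad_res_set" by blast
  define A where "A = (\<lambda>h. g * h) ` H \<union> {0}"
  have D: "diff_exact A quad_res_set" using D unfolding A_def .
  have H0: "0 \<notin> H" and H1: "1 \<in> H" and Hm: "\<And>x y. x \<in> H \<Longrightarrow> y \<in> H \<Longrightarrow> x * y \<in> H"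
    using HG(1) unfolding mult_subgroup_def by auto
  have two: "(2::'p mod_ring) \<noteq> 0"
  proof
    assume "(2::'p mod_ring) = 0"
    then have "(of_nat 2 :: 'p mod_ring) = 0" by simp
    then have "CARD('p) dvd 2" by (rule of_nat_0_mod_ring_dvd)
    then have "CARD('p) \<le> 2" by (rule dvd_imp_le) simp
    with assms show False by simp
  qed
  have A0: "0 \<in> A" unfolding A_def by simp
  have gA: "g \<in> A" unfolding A_def using H1 by (auto intro: image_eqI[of _ _ 1])
  have gR: "g \<in> quad_res_set" using diff_in[OF D gA A0 HG(2)] by simp
  have sym: "a = 0" if "a \<in> A" "-a \<in> A" for a
  proof (rule ccontr)
    assume "a \<noteq> 0"
    then have "a - 0 \<in> quad_res_set" using diff_in[OF D that(1) A0] by auto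
    moreover have "a - 0 = 0 - (-a)" by simp
    ultimately have "a = 0" using diff_uniq[OF D that(1) A0 A0 that(2)] by blast
    with \<open>a \<noteq> 0\<close> show False ..
  qed
  have pos: "a + b \<in> quad_res_set"
    if ab: "a \<in> A" "b \<in> A" "a \<noteq> 0" "b \<noteq> 0" "a \<noteq> b" for a b
  proof -
    obtain h1 where h1: "h1 \<in> H" "a = g * h1" using ab(1,3) unfolding A_def by auto
    obtain h2 where h2: "h2 \<in> H" "b = g * h2" using ab(2,4) unfolding A_def by auto
    have c1: "g * (h1 * h1) \<in> A" "g * (h2 * h2) \<in> A" unfolding A_def using Hm h1 h2 by auto
    have ne: "h1 * h1 \<noteq> h2 * h2"
    proof
      assume "h1 * h1 = h2 * h2"
      then have "(h1 - h2) * (h1 + h2) = 0" by (simp add: algebra_simps)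
      moreover have "h1 \<noteq> h2" using ab(5) h1 h2 by auto
      ultimately have "h1 = - h2" by (simp add: eq_neg_iff_add_eq_0)
      then have "-a = b" using h1 h2 by simp
      then show False using sym[OF ab(1)] ab by simp
    qed
    then have ne': "g * (h1 * h1) \<noteq> g * (h2 * h2)" using HG(2) by simp
    have "g * (g * (h1 * h1) - g * (h2 * h2)) \<in> quad_res_set"
      by (rule qr_mult[OF gR diff_in[OF D c1 ne']])
    moreover have "a - b \<in> quad_res_set" by (rule diff_in[OF D ab(1,2,5)])
    ultimately have "g * (g * (h1 * h1) - g * (h2 * h2)) / (a - b) \<in> quad_res_set"
      by (rule qr_div)
    moreover have "g * (g * (h1 * h1) - g * (h2 * h2)) / (a - b) = a + b"
    proof -
      have "a - b \<noteq> 0" using ab(5) by simp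
      moreover have "g * (g * (h1 * h1) - g * (h2 * h2)) = (a + b) * (a - b)"
        using h1 h2 by (simp add: algebra_simps)
      ultimately show ?thesis by simp
    qed
    ultimately show ?thesis by simp
  qed
  have le4: "card A \<le> 4" by (rule gen_bound[OF two D A0 gA HG(2) pos])
  have cq: "2 * (card A * card A - card A) = CARD('p) - 1"
    using gen_card[OF two D] by simp
  have cA: "card A = card H + 1"
  proof -
    have "card ((\<lambda>h. g * h) ` H) = card H"
      by (rule card_image) (use HG(2) in \<open>auto simp: inj_on_def\<close>)
    moreover have "0 \<notin> (\<lambda>h. g * h) ` H" using H0 HG(2) by auto
    ultimately show ?thesis unfolding A_def by simp
  qed
  have "card H = 2 \<or> card H = 3"
  proof -
    have "card H \<le> 3" using le4 cA by simp
    moreover have "card H \<ge> 2"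
    proof (rule ccontr)
      assume "\<not> card H \<ge> 2"
      then have "card A \<le> 2" using cA by simp
      then have "card A * card A - card A \<le> 2"
      proof -
        have "card A = 0 \<or> card A = 1 \<or> card A = 2" using \<open>card A \<le> 2\<close> by linarith
        then show ?thesis by auto
      qed
      then show False using cq assms by simp
    qed
    ultimately show ?thesis by auto
  qed
  then show False
  proof
    assume c2: "card H = 2"
    then obtain x y where xy: "H = {x, y}" "x \<noteq> y" by (auto simp: card_2_iff)
    obtain h where h: "H = {1, h}" "h \<noteq> 1"
    proof (cases "x = 1")
      case True then show ?thesis using that xy by auto
    next
      case False
      then have "y = 1" using xy H1 by auto
      then show ?thesis using that[of x] xy by (auto simp: insert_commute)
    qed
    have hH: "h \<in> H" using h by simp
    have "h * h \<in> H" by (rule Hm[OF hH hH])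
    moreover have "h \<noteq> 0" using H0 h by auto
    moreover have "h * h \<noteq> h"
    proof
      assume "h * h = h"
      then have "h * (h - 1) = 0" by (simp add: algebra_simps)
      then show False using \<open>h \<noteq> 0\<close> h(2) by simp
    qed
    ultimately have "h * h = 1" using h(1) by auto
    then have "(h - 1) * (h + 1) = 0" by (simp add: algebra_simps)
    then have "h = -1" using h(2) by (simp add: eq_neg_iff_add_eq_0)
    then have "-g \<in> A" unfolding A_def using h by (auto intro: image_eqI[of _ _ "-1"])
    then show False using sym[OF gA] HG(2) by simp
  next
    assume "card H = 3"
    then have "CARD('p) = 25" using cq cA by simp
    moreover have "prime CARD('p)" by (rule prime_card)
    ultimately have "prime (25::nat)" by simp
    moreover have "(5::nat) dvd 25" by simp
    ultimately have "(5::nat) = 1 \<or> (5::nat) = 25" unfolding prime_nat_iff by blast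
    then show False by simp
  qed
qed

end
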